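(* Let $S$ be a monoid such that the word $xyyx$ is an isoterm for $S$. Let $\mathbf u$ be a word and $x,y\in\mathrm{con}(\mathbf u)$ distinct variables such that: (i) each of $x,y$ occurs at most twice in $\mathbf u$; (ii) ${}_{1\mathbf u}x<_{\mathbf u}{}_{1\mathbf u}y$; (iii) if both $x$ and $y$ occur twice in $\mathbf u$, then $\mathbf u$ contains a linear variable $t$ with ${}_{1\mathbf u}y<_{\mathbf u}{}_{\mathbf u}t<_{\mathbf u}{}_{2\mathbf u}y$ and ${}_{2\mathbf u}x<_{\mathbf u}{}_{\mathbf u}t<_{\mathbf u}{}_{2\mathbf u}y$. Then the set $\{{}_{1\mathbf u}x,{}_{1\mathbf u}y\}$ is stable in $\mathbf u$ with respect to $S$.
   Context: Variables are letters of a countably infinite alphabet; words are elements of the free semigroup on it. A monoid $S$ satisfies $\mathbf u\approx\mathbf v$ if both sides are equal under every evaluation of variables in $S$. A word $\mathbf w$ is an isoterm for $S$ if $S$ satisfies no identity $\mathbf w\approx\mathbf w'$ with $\mathbf w'\ne\mathbf w$. $\mathrm{occ}_{\mathbf u}(x)$ is the number of occurrences of $x$ in $\mathbf u$, $\mathrm{con}(\mathbf u)$ the set of variables occurring in $\mathbf u$; $t$ is linear in $\mathbf u$ if it occurs exactly once, ${}_{\mathbf u}t$ denoting that occurrence. ${}_{i\mathbf u}x$ is the $i$-th occurrence of $x$ in $\mathbf u$; $<_{\mathbf u}$ is the order of occurrences by position. $l_{\mathbf u,\mathbf v}$ maps ${}_{i\mathbf u}x\mapsto{}_{i\mathbf v}x$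 for $i\le\min(\mathrm{occ}_{\mathbf u}(x),\mathrm{occ}_{\mathbf v}(x))$. A set $X$ of occurrences in $\mathbf u$ is stable in $\mathbf u$ with respect to $S$ if for every identity $\mathbf u\approx\mathbf v$ satisfied by $S$: each variable having an occurrence in $X$ occurs the same number of times in $\mathbf u$ and $\mathbf v$, and $l_{\mathbf u,\mathbf v}$ is defined on $X$ and is an order isomorphism from $(X,<_{\mathbf u})$ onto $(l_{\mathbf u,\mathbf v}(X),<_{\mathbf v})$. *)

theory Defs
  imports Main
begin

text \<open>Variables are natural numbers (a countably infinite alphabet); words are
nonempty lists of variables (elements of the free semigroup). A monoid is a
type of class monoid_mult.\<close>

type_synonym word = "nat list"

definition is_word :: "word \<Rightarrow> bool" where
  "is_word w \<longleftrightarrow> w \<noteq> []"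

definition eval_word :: "(nat \<Rightarrow> 'a::monoid_mult) \<Rightarrow> word \<Rightarrow> 'a" where
  "eval_word \<phi> w = prod_list (map \<phi> w)"

definition satisfies :: "'a::monoid_mult itself \<Rightarrow> word \<Rightarrow> word \<Rightarrow> bool" where
  "satisfies S u v \<longleftrightarrow> (\<forall>\<phi> :: nat \<Rightarrow> 'a. eval_word \<phi> u = eval_word \<phi> v)"

definition isoterm :: "'a::monoid_mult itself \<Rightarrow> word \<Rightarrow> bool" where
  "isoterm S w \<longleftrightarrow> (\<forall>w'. is_word w' \<and> satisfies S w w' \<longrightarrow> w' = w)"

definition occ :: "word \<Rightarrow> nat \<Rightarrow> nat" where
  "occ u x = length (filter (\<lambda>z. z = x) u)"

definition con :: "word \<Rightarrow> nat set" where
  "con u = set u"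

text \<open>An occurrence is a pair (x, i): the i-th occurrence of x (i \<ge> 1).
occ_pos u (x,i) is the list position of the i-th occurrence of x in u.\<close>
definition occ_pos :: "word \<Rightarrow> nat \<times> nat \<Rightarrow> nat" where
  "occ_pos u p = filter (\<lambda>j. u ! j = fst p) [0..<length u] ! (snd p - 1)"

definition is_occurrence :: "word \<Rightarrow> nat \<times> nat \<Rightarrow> bool" where
  "is_occurrence u p \<longleftrightarrow> 1 \<le> snd p \<and> snd p \<le> occ u (fst p)"

definition occ_less :: "word \<Rightarrow> nat \<times> nat \<Rightarrow> nat \<times> nat \<Rightarrow> bool" where
  "occ_less u p q \<longleftrightarrow> occ_pos u p < occ_pos u q"

text \<open>l_{u,v} maps (x,i) in u to (x,i) in v, defined when i \<le> occ_v(x).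
Stability of a set X of occurrences of u with respect to S.\<close>
definition stable :: "'a::monoid_mult itself \<Rightarrow> word \<Rightarrow> (nat \<times> nat) set \<Rightarrow> bool" where
  "stable S u X \<longleftrightarrow>
     (\<forall>v. is_word v \<and> satisfies S u v \<longrightarrow>
        (\<forall>p\<in>X. occ u (fst p) = occ v (fst p)) \<and>
        (\<forall>p\<in>X. is_occurrence v p) \<and>
        (\<forall>p\<in>X. \<forall>q\<in>X. occ_less u p q \<longleftrightarrow> occ_less v p q))"

end

theory Submission
  imports Defs
begin


definition subst :: "(nat \<Rightarrow> nat list) \<Rightarrow> nat list \<Rightarrow> nat list" where
  "subst \<sigma> w = concat (map \<sigma> w)"

lemma subst_simps[simp]: "subst \<sigma> [] = []" "subst \<sigma> (a#l) = \<sigma> a @ subst \<sigma> l"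
  by (auto simp: subst_def)

lemma eval_append: "eval_word \<phi> (a @ b) = eval_word \<phi> a * eval_word \<phi> b"
  by (simp add: eval_word_def)

lemma eval_subst: "eval_word \<phi> (subst \<sigma> w) = eval_word (\<lambda>z. eval_word \<phi> (\<sigma> z)) w"
  by (induction w) (auto simp: eval_append, auto simp: eval_word_def)

lemma sat_subst: "satisfies S u v \<Longrightarrow> satisfies S (subst \<sigma> u) (subst \<sigma> v)"
  by (simp add: satisfies_def eval_subst)

lemma sat_cong: "satisfies S u v \<Longrightarrow> satisfies S (p @ u @ s) (p @ v @ s)"
  by (simp add: satisfies_def eval_append)

lemma sat_sym: "satisfies S u v \<Longrightarrow> satisfies S v u"
  by (simp add: satisfies_def)

lemma iso_eq:
  fixes S :: "'a::monoid_mult itself"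
  assumes iso: "isoterm S [0,1,1,0]" and s: "satisfies S [0,1,1,0] w"
  shows "w = [0,1,1,0]"
proof (cases "w = []")
  case True
  have "satisfies S [0,1,1,0] ([0,1,1,0] @ [0,1,1,0])"
    using s True unfolding satisfies_def
    by (metis append_Nil eval_append mult_1_left eval_word_def list.simps(8) prod_list.Nil)
  then have "[0,1,1,0] @ [0,1,1,0] = ([0,1,1,0]::nat list)"
    using iso unfolding isoterm_def is_word_def by blast
  then show ?thesis by simp
next
  case False
  then show ?thesis using iso s unfolding isoterm_def is_word_def by blast
qed

lemma master:
  fixes S :: "'a::monoid_mult itself"
  assumes iso: "isoterm S [0,1,1,0]" and s: "satisfies S a b"
    and e: "p @ subst \<tau> a @ q = [0,1,1,0]"
  shows "p @ subst \<tau> b @ q = [0,1,1,0]"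
  using iso_eq[OF iso] sat_cong[OF sat_subst[OF s], of p \<tau> q] e by metis

lemma subst_single: "subst (\<lambda>k. if k = c then [d] else []) w = replicate (occ w c) d"
  by (induction w) (auto simp: occ_def)

fun np :: "nat \<Rightarrow> nat \<Rightarrow> nat list \<Rightarrow> nat" where
  "np z i [] = 0"
| "np z i (a#l) = (if a = z then (if i = 0 then 0 else Suc (np z (i-1) l)) else Suc (np z i l))"

lemma filt_cons: "filter (\<lambda>j. (a#v) ! j = z) [0..<length (a#v)]
   = (if a = z then [0] else []) @ map Suc (filter (\<lambda>j. v ! j = z) [0..<length v])"
proof -
  have "[0..<length (a#v)] = 0 # map Suc [0..<length v]"
    by (simp only: length_Cons, subst upt_conv_Cons, simp, simp add: map_Suc_upt)
  then show ?thesis by (simp add: filter_map o_def)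
qed

lemma length_filt: "length (filter (\<lambda>j. v ! j = z) [0..<length v]) = occ v z"
proof (induction v)
  case (Cons a v)
  show ?case by (subst filt_cons) (use Cons in \<open>auto simp: occ_def\<close>)
qed (simp add: occ_def)

lemma occ_pos_np: "i < occ v z \<Longrightarrow> occ_pos v (z, Suc i) = np z i v"
proof (induction v arbitrary: i)
  case Nil then show ?case by (simp add: occ_def)
next
  case (Cons a v)
  have e: "occ_pos (a#v) (z,Suc i) = ((if a = z then [0] else []) @ map Suc (filter (\<lambda>j. v ! j = z) [0..<length v])) ! i"
    unfolding occ_pos_def filt_cons by simp
  have e2: "\<And>k. k < occ v z \<Longrightarrow> filter (\<lambda>j. v ! j = z) [0..<length v] ! k = np z k v"
    using Cons.IH unfolding occ_pos_def by simp
  show ?case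
  proof (cases "a = z")
    case True
    then show ?thesis using Cons.prems e e2
      by (cases i) (auto simp: occ_def length_filt[unfolded occ_def])
  next
    case False
    then show ?thesis using Cons.prems e e2
      by (auto simp: occ_def length_filt[unfolded occ_def])
  qed
qed


definition cd :: "nat set \<Rightarrow> (nat \<Rightarrow> nat) \<Rightarrow> nat \<Rightarrow> nat list" where
  "cd A g z = (if z \<in> A then [g z] else [])"

lemma occ_cd: assumes inj: "inj_on g A" and a: "a \<in> A" shows "occ (subst (cd A g) v) (g a) = occ v a"
proof (induction v)
  case (Cons h l)
  show ?case
  proof (cases "h \<in> A")
    case True
    then have "(g h = g a) = (h = a)" using inj a by (auto simp: inj_on_eq_iff)
    then show ?thesis using Cons True by (simp add: occ_def cd_def)
  next
    case False
    then have "h \<noteq> a" using a by auto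
    then show ?thesis using Cons False by (simp add: occ_def cd_def)
  qed
qed (simp add: occ_def)

lemma set_cd: "set (subst (cd A g) v) \<subseteq> g ` A"
proof (induction v)
  case (Cons h l)
  then show ?case by (cases "h \<in> A") (simp_all add: cd_def)
qed simp

lemma np_cd:
  assumes inj: "inj_on g A" and a: "a \<in> A" and b: "b \<in> A"
  shows "i < occ v a \<Longrightarrow> j < occ v b \<Longrightarrow>
    (np a i v < np b j v) = (np (g a) i (subst (cd A g) v) < np (g b) j (subst (cd A g) v))"
proof (induction v arbitrary: i j)
  case Nil then show ?case by (simp add: occ_def)
next
  case (Cons h l)
  show ?case
  proof (cases "h \<in> A")
    case False
    then have "h \<noteq> a" "h \<noteq> b" using a b by auto
    moreover have "subst (cd A g) (h#l) = subst (cd A g) l" using False by (simp add: cd_def)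
    moreover have "occ (h#l) a = occ l a" "occ (h#l) b = occ l b"
      using \<open>h \<noteq> a\<close> \<open>h \<noteq> b\<close> by (auto simp: occ_def)
    ultimately show ?thesis using Cons.prems Cons.IH[of i j] by simp
  next
    case True
    have ea: "(g h = g a) = (h = a)" "(g h = g b) = (h = b)"
      using inj True a b by (auto simp: inj_on_eq_iff)
    have cs: "subst (cd A g) (h#l) = g h # subst (cd A g) l" using True by (simp add: cd_def)
    have IH: "\<And>i j. i < occ l a \<Longrightarrow> j < occ l b \<Longrightarrow>
      (np a i l < np b j l) = (np (g a) i (subst (cd A g) l) < np (g b) j (subst (cd A g) l))"
      by (rule Cons.IH)
    have oa: "occ (h#l) a = (if h = a then Suc (occ l a) else occ l a)" 
     and ob: "occ (h#l) b = (if h = b then Suc (occ l b) else occ l b)" by (auto simp: occ_def)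
    show ?thesis
      unfolding cs np.simps ea
      using Cons.prems oa ob IH[of "i - 1" "j - 1"] IH[of i "j - 1"] IH[of "i - 1" j] IH[of i j]
      by (cases "h = a"; cases "h = b"; cases "i = 0"; cases "j = 0"; simp)
  qed
qed

lemma occ_less_cd:
  assumes inj: "inj_on g A" and a: "a \<in> A" and b: "b \<in> A"
    and i: "1 \<le> i" "i \<le> occ v a" and j: "1 \<le> j" "j \<le> occ v b"
  shows "occ_less v (a,i) (b,j) = occ_less (subst (cd A g) v) (g a, i) (g b, j)"
proof -
  obtain i' where ij1: "i = Suc i'" using i(1) by (cases i) auto
  obtain j' where ij2: "j = Suc j'" using j(1) by (cases j) auto
  note ij = ij1 ij2
  have *: "i' < occ v a" "j' < occ v b" using i j ij by auto
  have **: "i' < occ (subst (cd A g) v) (g a)" "j' < occ (subst (cd A g) v) (g b)"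
    using * occ_cd[OF inj a, of v] occ_cd[OF inj b, of v] by auto
  have e1: "occ_less v (a,i) (b,j) = (np a i' v < np b j' v)"
    unfolding occ_less_def ij occ_pos_np[OF *(1)] occ_pos_np[OF *(2)] ..
  have e2: "occ_less (subst (cd A g) v) (g a, i) (g b, j) =
     (np (g a) i' (subst (cd A g) v) < np (g b) j' (subst (cd A g) v))"
    unfolding occ_less_def ij occ_pos_np[OF **(1)] occ_pos_np[OF **(2)] ..
  show ?thesis unfolding e1 e2 by (rule np_cd[OF inj a b *])
qed



lemma len_occ: "set w \<subseteq> {0,1,2::nat} \<Longrightarrow> length w = occ w 0 + occ w 1 + occ w 2"
  by (induction w) (auto simp: occ_def)

lemma len2: "length w = 2 \<Longrightarrow> \<exists>a b. w = [a,b]"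
  by (auto simp: numeral_2_eq_2 length_Suc_conv)
lemma len3: "length w = 3 \<Longrightarrow> \<exists>a b c. w = [a,b,c]"
  by (auto simp: numeral_3_eq_3 length_Suc_conv)
lemma len5: "length w = 5 \<Longrightarrow> \<exists>a b c d e. w = [a,b,c,d,e]"
  by (auto simp: eval_nat_numeral length_Suc_conv)

lemma ol: "i < occ w p \<Longrightarrow> j < occ w q \<Longrightarrow> occ_less w (p, Suc i) (q, Suc j) = (np p i w < np q j w)"
  by (simp add: occ_less_def occ_pos_np)

lemma cuD:
  assumes s: "set w \<subseteq> {0,1,2}" and o: "occ w 0 = 2" "occ w 1 = 2" "occ w 2 = 1"
    and l: "occ_less w (0,1) (1,1)" "occ_less w (1,1) (2,1)" "occ_less w (2,1) (1,2)" "occ_less w (0,2) (2,1)"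
  shows "w \<in> {[0,0,1,2,1],[0,1,0,2,1]}"
proof -
  have l': "np 0 0 w < np 1 0 w" "np 1 0 w < np 2 0 w" "np 2 0 w < np 1 1 w" "np 0 1 w < np 2 0 w"
    using l o ol[of 0 w 0 0 1] ol[of 0 w 1 0 2] ol[of 0 w 2 1 1] ol[of 1 w 0 0 2] by (simp_all add: numeral_2_eq_2)
  have "length w = 5" using len_occ[of w] s o by auto
  then obtain a b c d e where w: "w = [a,b,c,d,e]" using len5 by blast
  have "a \<in> {0,1,2}" "b \<in> {0,1,2}" "c \<in> {0,1,2}" "d \<in> {0,1,2}" "e \<in> {0,1,2}" using s w by auto
  then show ?thesis using o l' unfolding w
    apply (simp only: insert_iff empty_iff simp_thms)
    apply (elim disjE)
    apply (simp_all add: occ_def)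
    done
qed


lemma cuC:
  assumes s: "set w \<subseteq> {0,1}" and o: "1 \<le> occ w 0" "occ w 0 \<le> 2" "1 \<le> occ w 1" "occ w 1 \<le> 2"
    "\<not>(occ w 0 = 2 \<and> occ w 1 = 2)" and l: "occ_less w (0,1) (1,1)"
  shows "w \<in> {[0,1],[0,1,1],[0,0,1],[0,1,0]}"
proof -
  have l': "np 0 0 w < np 1 0 w" using l o ol[of 0 w 0 0 1] by simp
  have "occ w 2 = 0" using s by (auto simp: occ_def filter_empty_conv)
  moreover have "set w \<subseteq> {0,1,2}" using s by auto
  ultimately have "length w = 2 \<or> length w = 3" using len_occ[of w] o by auto
  then show ?thesis
  proof
    assume "length w = 2"
    then obtain a b where w: "w = [a,b]" using len2 by blast
    have "a \<in> {0,1}" "b \<in> {0,1}" using s w by auto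
    then show ?thesis using o l' unfolding w
      apply (simp only: insert_iff empty_iff simp_thms)
      apply (elim disjE)
      apply (simp_all add: occ_def)
      done
  next
    assume "length w = 3"
    then obtain a b c where w: "w = [a,b,c]" using len3 by blast
    have "a \<in> {0,1}" "b \<in> {0,1}" "c \<in> {0,1}" using s w by auto
    then show ?thesis using o l' unfolding w
      apply (simp only: insert_iff empty_iff simp_thms)
      apply (elim disjE)
      apply (simp_all add: occ_def)
      done
  qed
qed

lemma count_master:
  fixes S :: "'a::monoid_mult itself"
  assumes iso: "isoterm S [0,1,1,0]" and s: "satisfies S cu cv" and o: "occ cu k = 1 \<or> occ cu k = 2"
  shows "occ cv k = occ cu k"
  using o
proof
  assume o1: "occ cu k = 1"
  have "[] @ subst (\<lambda>z. if z = k then [0] else []) cu @ [1,1,0] = [0,1,1,0]"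
    by (simp add: subst_single o1)
  from master[OF iso s this] have "replicate (occ cv k) (0::nat) = [0]" by (simp add: subst_single)
  then have "length (replicate (occ cv k) (0::nat)) = length [0::nat]" by simp
  then show ?thesis using o1 by simp
next
  assume o1: "occ cu k = 2"
  have "[0] @ subst (\<lambda>z. if z = k then [1] else []) cu @ [0] = [0,1,1,0]"
    by (simp add: subst_single o1 numeral_2_eq_2)
  from master[OF iso s this] have "replicate (occ cv k) (1::nat) = [1,1]" by (simp add: subst_single)
  then have "length (replicate (occ cv k) (1::nat)) = length [1,1::nat]" by simp
  then show ?thesis using o1 by simp
qed

lemma subst_id: "subst (\<lambda>k. [k]) w = w" by (induction w) auto

lemma cvA:
  fixes S :: "'a::monoid_mult itself"
  assumes iso: "isoterm S [0,1,1,0]" and sat: "satisfies S cu cv" and s: "set cv \<subseteq> {0,1}"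
    and cu: "cu \<in> {[0,1],[0,1,1],[0,0,1],[0,1,0]}"
  shows "cv = cu"
proof -
  have o: "occ cv 0 = occ cu 0" "occ cv 1 = occ cu 1"
    using count_master[OF iso sat, of 0] count_master[OF iso sat, of 1] cu by (auto simp: occ_def)
  have "occ cv 2 = 0" using s by (auto simp: occ_def filter_empty_conv)
  moreover have "set cv \<subseteq> {0,1,2}" using s by auto
  ultimately have len: "length cv = occ cu 0 + occ cu 1" using len_occ[of cv] o by auto
  consider "cu = [0,1]" | "cu = [0,1,1]" | "cu = [0,0,1]" | "cu = [0,1,0]" using cu by auto
  then show ?thesis
  proof cases
    case 1
    have "[] @ subst (\<lambda>k. [k]) cu @ [1,0] = [0,1,1,0]" using 1 by simp
    from master[OF iso sat this] show ?thesis using 1 by (simp add: subst_id)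
  next
    case 2
    have "[] @ subst (\<lambda>k. [k]) cu @ [0] = [0,1,1,0]" using 2 by simp
    from master[OF iso sat this] show ?thesis using 2 by (simp add: subst_id)
  next
    case 3
    have "[0] @ subst (\<lambda>k. [1 - k]) cu @ [] = [0,1,1,0]" using 3 by simp
    from master[OF iso sat this] have f: "subst (\<lambda>k. [1 - k]) cv = [1,1,0]" by simp
    have "length cv = 3" using len 3 by (simp add: occ_def)
    then obtain a b c where w: "cv = [a,b,c]" using len3 by blast
    have "a \<in> {0,1}" "b \<in> {0,1}" "c \<in> {0,1}" using s w by auto
    then show ?thesis using f 3 unfolding w
      apply (simp only: insert_iff empty_iff simp_thms)
      apply (elim disjE)
      apply (simp_all)
      done
  next
    case 4
    have "[] @ subst (\<lambda>k. if k = 0 then [0] else [1,1]) cu @ [] = [0,1,1,0]" using 4 by simp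
    from master[OF iso sat this] have f: "subst (\<lambda>k. if k = 0 then [0] else [1,1]) cv = [0,1,1,0]" by simp
    have "length cv = 3" using len 4 by (simp add: occ_def)
    then obtain a b c where w: "cv = [a,b,c]" using len3 by blast
    have "a \<in> {0,1}" "b \<in> {0,1}" "c \<in> {0,1}" using s w by auto
    then show ?thesis using f 4 unfolding w
      apply (simp only: insert_iff empty_iff simp_thms)
      apply (elim disjE)
      apply (simp_all)
      done
  qed
qed

lemma cvB:
  fixes S :: "'a::monoid_mult itself"
  assumes iso: "isoterm S [0,1,1,0]" and sat: "satisfies S cu cv" and s: "set cv \<subseteq> {0,1,2}"
    and cu: "cu \<in> {[0,0,1,2,1],[0,1,0,2,1]}"
  shows "occ cv 0 = 2 \<and> occ cv 1 = 2 \<and> occ_less cv (0,1) (1,1)"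
proof -
  have ocu: "occ cu 0 = 2" "occ cu 1 = 2" "occ cu 2 = 1" using cu by (auto simp: occ_def)
  have o: "occ cv 0 = 2" "occ cv 1 = 2" "occ cv 2 = 1"
    using count_master[OF iso sat, of 0] count_master[OF iso sat, of 1] count_master[OF iso sat, of 2] ocu
    by auto
  have "[] @ subst (\<lambda>k. if k = 1 then [0] else if k = 2 then [1,1] else []) cu @ [] = [0,1,1,0]"
    using cu by auto
  from master[OF iso sat this] have f1: "subst (\<lambda>k. if k = 1 then [0] else if k = 2 then [1,1] else []) cv = [0,1,1,0]"
    by simp
  have "[0] @ subst (\<lambda>k. if k = 0 then [1] else if k = 2 then [0] else []) cu @ [] = [0,1,1,0]"
    using cu by auto
  from master[OF iso sat this] have f2: "subst (\<lambda>k. if k = 0 then [1] else if k = 2 then [0] else []) cv = [1,1,0]"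
    by simp
  have f3: "subst (\<lambda>k. if k = 0 then [1] else if k = 1 then [0] else []) cv \<noteq> [0,1,1,0]"
  proof
    assume "subst (\<lambda>k. if k = 0 then [1] else if k = 1 then [0] else []) cv = [0,1,1,0]"
    then have "[] @ subst (\<lambda>k. if k = 0 then [1] else if k = 1 then [0] else []) cv @ [] = [0,1,1,0]" by simp
    from master[OF iso sat_sym[OF sat] this] show False using cu by auto
  qed
  have "length cv = 5" using len_occ[of cv] s o by auto
  then obtain a b c d e where w: "cv = [a,b,c,d,e]" using len5 by blast
  have "a \<in> {0,1,2}" "b \<in> {0,1,2}" "c \<in> {0,1,2}" "d \<in> {0,1,2}" "e \<in> {0,1,2}" using s w by auto
  then have "np 0 0 cv < np 1 0 cv" using o f1 f2 f3 unfolding w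
    apply (simp only: insert_iff empty_iff simp_thms)
    apply (elim disjE)
    apply (simp_all add: occ_def)
    done
  then show ?thesis using o ol[of 0 cv 0 0 1] by simp
qed



lemma finish:
  assumes "occ v x = occ u x" "occ v y = occ u y" "1 \<le> occ u x" "1 \<le> occ u y"
    "occ_less u (x,1) (y,1)" "occ_less v (x,1) (y,1)"
  shows "(\<forall>p\<in>{(x,1),(y,1)}. occ u (fst p) = occ v (fst p)) \<and>
        (\<forall>p\<in>{(x,1),(y,1)}. is_occurrence v p) \<and>
        (\<forall>p\<in>{(x,1),(y,1)}. \<forall>q\<in>{(x,1),(y,1)}. occ_less u p q \<longleftrightarrow> occ_less v p q)"
  using assms by (auto simp: is_occurrence_def occ_less_def)

lemma occ_pos1: "z \<in> set u \<Longrightarrow> 1 \<le> occ u z"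
  by (induction u) (auto simp: occ_def)

theorem lemma3p6:
  fixes S :: "'a::monoid_mult itself"
    and u :: word and x y :: nat
  assumes iso: "isoterm S [0, 1, 1, 0]"
    and uw: "is_word u"
    and xc: "x \<in> con u" and yc: "y \<in> con u" and xy: "x \<noteq> y"
    and i: "occ u x \<le> 2" "occ u y \<le> 2"
    and ii: "occ_less u (x, 1) (y, 1)"
    and iii: "occ u x = 2 \<and> occ u y = 2 \<longrightarrow>
              (\<exists>t. occ u t = 1 \<and>
                   occ_less u (y, 1) (t, 1) \<and> occ_less u (t, 1) (y, 2) \<and>
                   occ_less u (x, 2) (t, 1) \<and> occ_less u (t, 1) (y, 2))"
  shows "stable S u {(x, 1), (y, 1)}"
  unfolding stable_def
proof (intro allI impI)
  fix v assume "is_word v \<and> satisfies S u v"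
  then have sat: "satisfies S u v" by blast
  have ox: "1 \<le> occ u x" and oy: "1 \<le> occ u y" using xc yc occ_pos1 by (auto simp: con_def)
  obtain t where ht: "if occ u x = 2 \<and> occ u y = 2 then (occ u t = 1 \<and>
                   occ_less u (y, 1) (t, 1) \<and> occ_less u (t, 1) (y, 2) \<and>
                   occ_less u (x, 2) (t, 1)) else t = x"
    using iii by (cases "occ u x = 2 \<and> occ u y = 2") auto
  define A where "A = {x,y,t}"
  define g where "g = (\<lambda>z. if z = x then 0 else if z = y then 1 else (2::nat))"
  have txy: "t = x \<or> (t \<noteq> x \<and> t \<noteq> y)"
    using ht by (cases "occ u x = 2 \<and> occ u y = 2") auto
  have inj: "inj_on g A" using txy xy unfolding A_def g_def inj_on_def by auto
  have xA: "x \<in> A" and yA: "y \<in> A" and tA: "t \<in> A" unfolding A_def by auto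
  have gx: "g x = 0" and gy: "g y = 1" using xy unfolding g_def by auto
  define cu where "cu = subst (cd A g) u"
  define cv where "cv = subst (cd A g) v"
  have sat': "satisfies S cu cv" unfolding cu_def cv_def by (rule sat_subst[OF sat])
  have ocu: "occ cu 0 = occ u x" "occ cu 1 = occ u y"
    using occ_cd[OF inj xA, of u] occ_cd[OF inj yA, of u] gx gy by (simp_all add: cu_def)
  have ocv: "occ cv 0 = occ v x" "occ cv 1 = occ v y"
    using occ_cd[OF inj xA, of v] occ_cd[OF inj yA, of v] gx gy by (simp_all add: cv_def)
  have lcu: "occ_less cu (0,1) (1,1)"
    using ii occ_less_cd[OF inj xA yA, of 1 u 1] ox oy gx gy by (simp add: cu_def)
  have main: "occ v x = occ u x \<and> occ v y = occ u y \<and> occ_less v (x,1) (y,1)"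
  proof (cases "occ u x = 2 \<and> occ u y = 2")
    case True
    with ht have t1: "occ u t = 1" and h1: "occ_less u (y, 1) (t, 1)" "occ_less u (t, 1) (y, 2)"
      "occ_less u (x, 2) (t, 1)" by auto
    then have "t \<noteq> x" "t \<noteq> y" using True by auto
    then have gt: "g t = 2" unfolding g_def by auto
    have ocu2: "occ cu 2 = 1" using occ_cd[OF inj tA, of u] gt t1 by (simp add: cu_def)
    have l2: "occ_less cu (1,1) (2,1)" "occ_less cu (2,1) (1,2)" "occ_less cu (0,2) (2,1)"
      using h1 occ_less_cd[OF inj yA tA, of 1 u 1] occ_less_cd[OF inj tA yA, of 1 u 2]
        occ_less_cd[OF inj xA tA, of 2 u 1] True t1 gx gy gt by (simp_all add: cu_def)
    have scu: "set cu \<subseteq> {0,1,2}" using set_cd[of A g u] unfolding cu_def A_def g_def by auto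
    have cuin: "cu \<in> {[0,0,1,2,1],[0,1,0,2,1]}"
      using cuD[OF scu _ _ ocu2 lcu l2] ocu True by auto
    have scv: "set cv \<subseteq> {0,1,2}" using set_cd[of A g v] unfolding cv_def A_def g_def by auto
    have r: "occ cv 0 = 2 \<and> occ cv 1 = 2 \<and> occ_less cv (0,1) (1,1)"
      by (rule cvB[OF iso sat' scv cuin])
    then have "occ v x = occ u x" "occ v y = occ u y" using ocv True by auto
    moreover have "occ_less v (x,1) (y,1)"
      using r occ_less_cd[OF inj xA yA, of 1 v 1] ocv gx gy by (simp add: cv_def)
    ultimately show ?thesis by blast
  next
    case False
    with ht have tx: "t = x" by auto
    have scu: "set cu \<subseteq> {0,1}" using set_cd[of A g u] unfolding cu_def A_def g_def tx by auto
    have cuin: "cu \<in> {[0,1],[0,1,1],[0,0,1],[0,1,0]}"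
      using cuC[OF scu _ _ _ _ _ lcu] ocu False ox oy i by auto
    have scv: "set cv \<subseteq> {0,1}" using set_cd[of A g v] unfolding cv_def A_def g_def tx by auto
    have r: "cv = cu" by (rule cvA[OF iso sat' scv cuin])
    then have "occ v x = occ u x" "occ v y = occ u y" using ocv ocu by auto
    moreover have "occ_less v (x,1) (y,1)"
      using r lcu occ_less_cd[OF inj xA yA, of 1 v 1] ocv ocu ox oy gx gy calculation by (simp add: cv_def)
    ultimately show ?thesis by blast
  qed
  show "(\<forall>p\<in>{(x,1),(y,1)}. occ u (fst p) = occ v (fst p)) \<and>
        (\<forall>p\<in>{(x,1),(y,1)}. is_occurrence v p) \<and>
        (\<forall>p\<in>{(x,1),(y,1)}. \<forall>q\<in>{(x,1),(y,1)}. occ_less u p q \<longleftrightarrow> occ_less v p q)"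
    using finish[of v x u y] main ox oy ii by blast
qed

end
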